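(* For integers $n\ge j\ge 1$, \[ \sum_{k=j}^{n}\genfrac{[}{]}{0pt}{}{n+1}{k+1}\genfrac{\{}{\}}{0pt}{}{k}{j}\,k=\binom{n+1}{j}\frac{n!}{(j-1)!}\left(H_{n+1}-H_{j}\right). \]
   Context: $\genfrac{\{}{\}}{0pt}{}{n}{k}$ denotes the Stirling numbers of the second kind, $\genfrac{[}{]}{0pt}{}{n}{k}$ the unsigned Stirling numbers of the first kind, and $H_n=\sum_{i=1}^n 1/i$ the harmonic numbers. *)

theory Defs
  imports "HOL-Analysis.Analysis" "HOL-Combinatorics.Stirling"
begin

end

theory Submission
  imports Defs
begin

lemma K: "real (Suc i) * real (m choose Suc i) + real i * real (m choose i) = real m * real (m choose i)"
proof -
  have "Suc i * (m choose Suc i) + i * (m choose i) = m * (m choose i)"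
  proof (cases m)
    case 0 then show ?thesis by (cases i) auto
  next
    case (Suc p)
    show ?thesis
    proof (cases i)
      case 0 then show ?thesis by simp
    next
      case (Suc q)
      have a: "Suc i * (Suc p choose Suc i) = Suc p * (p choose i)"
        by (metis Suc_times_binomial_eq mult.commute)
      have b: "i * (Suc p choose i) = Suc p * (p choose q)"
        unfolding Suc by (metis Suc_times_binomial_eq mult.commute)
      have c: "(Suc p choose i) = (p choose i) + (p choose q)"
        unfolding Suc by simp
      show ?thesis unfolding \<open>m = Suc p\<close> a b unfolding c by (simp add: algebra_simps Suc)
    qed
  qed
  then show ?thesis by (metis of_nat_add of_nat_mult)
qed

lemma shiftsum:
  fixes f :: "nat \<Rightarrow> real"
  shows "(\<Sum>k\<le>Suc n. real (stirling (Suc n + 1) (k+1)) * f k)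
       = real (Suc n) * (\<Sum>k\<le>n. real (stirling (n+1) (k+1)) * f k)
         + (\<Sum>k\<le>n. real (stirling (n+1) (k+1)) * f (Suc k))"
proof -
  have "(\<Sum>k\<le>Suc n. real (stirling (Suc n + 1) (k+1)) * f k)
      = (\<Sum>k\<le>Suc n. real (Suc n) * (real (stirling (n+1) (k+1)) * f k))
        + (\<Sum>k\<le>Suc n. real (stirling (n+1) k) * f k)"
    by (simp add: sum.distrib[symmetric] algebra_simps)
  also have "(\<Sum>k\<le>Suc n. real (Suc n) * (real (stirling (n+1) (k+1)) * f k))
      = real (Suc n) * (\<Sum>k\<le>n. real (stirling (n+1) (k+1)) * f k)"
    by (simp add: sum_distrib_left)
  also have "(\<Sum>k\<le>Suc n. real (stirling (n+1) k) * f k)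
      = (\<Sum>k\<le>n. real (stirling (n+1) (k+1)) * f (Suc k))"
    by (subst sum.atMost_Suc_shift) simp
  finally show ?thesis .
qed

definition A :: "nat \<Rightarrow> nat \<Rightarrow> real" where
  "A n j = (\<Sum>k\<le>n. real (stirling (n+1) (k+1)) * real (Stirling k j))"
definition B :: "nat \<Rightarrow> nat \<Rightarrow> real" where
  "B n j = (\<Sum>k\<le>n. real (stirling (n+1) (k+1)) * real (Stirling k j) * real k)"

lemma A0: "A (Suc n) 0 = real (Suc n) * A n 0"
  unfolding A_def by (subst shiftsum) (simp del: stirling.simps)

lemma AS: "A (Suc n) (Suc i) = real (n + 2 + i) * A n (Suc i) + A n i"
proof -
  have "A (Suc n) (Suc i) = real (Suc n) * A n (Suc i)
     + (\<Sum>k\<le>n. real (stirling (n+1) (k+1)) * real (Stirling (Suc k) (Suc i)))"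
    unfolding A_def by (subst shiftsum) (simp del: stirling.simps Stirling.simps)
  also have "(\<Sum>k\<le>n. real (stirling (n+1) (k+1)) * real (Stirling (Suc k) (Suc i)))
     = (\<Sum>k\<le>n. real (Suc i) * (real (stirling (n+1) (k+1)) * real (Stirling k (Suc i)))
           + real (stirling (n+1) (k+1)) * real (Stirling k i))"
    by (intro sum.cong) (simp_all del: stirling.simps add: algebra_simps)
  also have "\<dots> = real (Suc i) * A n (Suc i) + A n i"
    unfolding A_def by (simp only: sum.distrib sum_distrib_left)
  finally show ?thesis by (simp add: algebra_simps)
qed

lemma St0: "Stirling k 0 = (if k = 0 then 1 else 0)" by (cases k) auto

lemma B0: "B n 0 = 0"
  unfolding B_def by (intro sum.neutral) (auto simp: St0)

lemma BS: "B (Suc n) (Suc i) = real (n + 2 + i) * B n (Suc i) + B n i + real (Suc i) * A n (Suc i) + A n i"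
proof -
  have "B (Suc n) (Suc i) = real (Suc n) * B n (Suc i)
     + (\<Sum>k\<le>n. real (stirling (n+1) (k+1)) * (real (Stirling (Suc k) (Suc i)) * real (Suc k)))"
    unfolding B_def using shiftsum[of n "\<lambda>k. real (Stirling k (Suc i)) * real k"]
    by (simp del: stirling.simps Stirling.simps add: mult.assoc)
  also have "(\<Sum>k\<le>n. real (stirling (n+1) (k+1)) * (real (Stirling (Suc k) (Suc i)) * real (Suc k)))
     = (\<Sum>k\<le>n. real (Suc i) * (real (stirling (n+1) (k+1)) * real (Stirling k (Suc i)) * real k)
           + (real (stirling (n+1) (k+1)) * real (Stirling k i) * real k)
           + real (Suc i) * (real (stirling (n+1) (k+1)) * real (Stirling k (Suc i)))
           + real (stirling (n+1) (k+1)) * real (Stirling k i))"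
    by (intro sum.cong) (simp_all del: stirling.simps add: algebra_simps)
  also have "\<dots> = real (Suc i) * B n (Suc i) + B n i + real (Suc i) * A n (Suc i) + A n i"
    unfolding A_def B_def by (simp only: sum.distrib sum_distrib_left)
  finally show ?thesis by (simp add: algebra_simps)
qed

lemma Aclosed: "A n j * fact j = real (n choose j) * fact n"
proof (induction n arbitrary: j)
  case 0
  then show ?case unfolding A_def by (cases j) auto
next
  case (Suc n)
  show ?case
  proof (cases j)
    case 0
    then show ?thesis using Suc.IH[of 0] by (simp add: A0)
  next
    case (Suc i)
    have "A (Suc n) (Suc i) * fact (Suc i)
        = real (n + 2 + i) * (A n (Suc i) * fact (Suc i)) + real (Suc i) * (A n i * fact i)"
      by (simp add: AS algebra_simps)
    also have "\<dots> = (real (n + 2 + i) * real (n choose Suc i) + real (Suc i) * real (n choose i)) * fact n"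
      by (simp only: Suc.IH) (simp add: algebra_simps)
    also have "\<dots> = real (Suc n) * real (Suc n choose Suc i) * fact n"
    proof -
      have "real (n + 2 + i) * real (n choose Suc i) + real (Suc i) * real (n choose i)
          = real (Suc n) * (real (n choose Suc i) + real (n choose i))"
        using K[of i n] by (simp add: algebra_simps)
      then show ?thesis by simp
    qed
    also have "\<dots> = real (Suc n choose Suc i) * fact (Suc n)"
      by (simp add: fact_Suc)
    finally show ?thesis using Suc by simp
  qed
qed

lemma alg:
  fixes c0 c1 n i D :: real
  assumes K: "(i+1)*c1 + i*c0 = (n+1)*c0" and "n \<ge> 0" "i \<ge> 0"
  shows "(n+2+i)*c1*D + i*c0*(D + 1/(i+1)) + c1 = (c1+c0)*(n+1)*(D + 1/(n+2))"
proof -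
  have e1: "(n+2+i)*c1 + i*c0 = (c1+c0)*(n+1)" using K by (simp add: algebra_simps)
  have e2: "i*c0/(i+1) + c1 = (c1+c0)*(n+1)/(n+2)"
  proof -
    have "(i*c0/(i+1) + c1) * ((i+1)*(n+2)) = ((c1+c0)*(n+1)/(n+2)) * ((i+1)*(n+2))"
    proof -
      have "(i*c0/(i+1) + c1) * ((i+1)*(n+2)) = (i*c0 + (i+1)*c1)*(n+2)"
        using assms by (simp add: field_simps)
      also have "\<dots> = (c1+c0)*(n+1)*(i+1)"
      proof -
        have "(i*c0 + (i+1)*c1)*(n+2) - (c1+c0)*(n+1)*(i+1) = (i+1)*c1 + i*c0 - (n+1)*c0"
          by (simp add: algebra_simps)
        then show ?thesis using K by simp
      qed
      also have "\<dots> = ((c1+c0)*(n+1)/(n+2)) * ((i+1)*(n+2))"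
        using assms by (simp add: field_simps)
      finally show ?thesis .
    qed
    moreover have "(i+1)*(n+2) \<noteq> 0" using assms by simp
    ultimately show ?thesis by (meson mult_right_cancel)
  qed
  have "(n+2+i)*c1*D + i*c0*(D + 1/(i+1)) + c1 = ((n+2+i)*c1 + i*c0)*D + (i*c0/(i+1) + c1)"
    by (simp add: algebra_simps)
  also have "\<dots> = (c1+c0)*(n+1)*D + (c1+c0)*(n+1)/(n+2)" using e1 e2 by simp
  also have "\<dots> = (c1+c0)*(n+1)*(D + 1/(n+2))" by (simp add: distrib_left)
  finally show ?thesis .
qed

lemma Bclosed: "B n (Suc i) * fact i = real (Suc n choose Suc i) * fact n * (harm (Suc n) - harm (Suc i))"
proof (induction n arbitrary: i)
  case 0
  then show ?case unfolding B_def by (cases i) auto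
next
  case (Suc n)
  define D :: real where "D = harm (Suc n) - harm (Suc i)"
  define c1 where "c1 = real (Suc n choose Suc i)"
  define c0 where "c0 = real (Suc n choose i)"
  have h1: "B n (Suc i) * fact i = c1 * fact n * D" unfolding c1_def D_def by (rule Suc.IH)
  have h2: "B n i * fact i = real i * c0 * fact n * (D + 1/(real i + 1))"
  proof (cases i)
    case 0 then show ?thesis by (simp add: B0)
  next
    case (Suc m)
    have "B n i * fact i = real (Suc m) * (B n (Suc m) * fact m)" by (simp add: Suc fact_Suc algebra_simps)
    also have "\<dots> = real (Suc m) * (real (Suc n choose Suc m) * fact n * (harm (Suc n) - harm (Suc m)))"
      by (simp only: Suc.IH)
    also have "harm (Suc n) - harm (Suc m) = D + 1/(real i + 1)"
      unfolding D_def Suc by (simp add: harm_Suc inverse_eq_divide)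
    finally show ?thesis unfolding c0_def Suc by (simp add: mult_ac)
  qed
  have h3: "A n (Suc i) * fact (Suc i) + A n i * fact i = c1 * fact n"
    unfolding Aclosed c1_def by (simp add: algebra_simps)
  have K': "(real i + 1) * c1 + real i * c0 = (real n + 1) * c0"
  proof -
    have "real (Suc i) = real i + 1" "real (Suc n) = real n + 1" by simp_all
    then show ?thesis using K[of i "Suc n"] unfolding c0_def c1_def by metis
  qed
  have "B (Suc n) (Suc i) * fact i
      = real (n + 2 + i) * (B n (Suc i) * fact i) + B n i * fact i
        + (A n (Suc i) * fact (Suc i) + A n i * fact i)"
    by (simp add: BS fact_Suc algebra_simps)
  also have "\<dots> = fact n * ((real n + 2 + real i) * c1 * D + real i * c0 * (D + 1 / (real i + 1)) + c1)"
    unfolding h1 h2 h3 by (simp add: algebra_simps)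
  also have "\<dots> = fact n * ((c1 + c0) * (real n + 1) * (D + 1 / (real n + 2)))"
    using alg[OF K'] by simp
  also have "\<dots> = real (Suc (Suc n) choose Suc i) * fact (Suc n) * (harm (Suc (Suc n)) - harm (Suc i))"
    unfolding c0_def c1_def D_def by (simp add: harm_Suc fact_Suc inverse_eq_divide algebra_simps)
  finally show ?case .
qed

theorem theorem3:
  fixes n j :: nat
  assumes "1 \<le> j" and "j \<le> n"
  shows "(\<Sum>k=j..n. real (stirling (n+1) (k+1)) * real (Stirling k j) * real k)
         = real ((n+1) choose j) * (fact n / fact (j-1)) * (harm (n+1) - harm j)"
proof -
  obtain i where j: "j = Suc i" using assms(1) by (cases j) auto
  have "(\<Sum>k=j..n. real (stirling (n+1) (k+1)) * real (Stirling k j) * real k) = B n j"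
    unfolding B_def
    by (rule sum.mono_neutral_left) auto
  also have "\<dots> = B n (Suc i) * fact i / fact i" using j by simp
  also have "\<dots> = real ((n+1) choose j) * (fact n / fact (j-1)) * (harm (n+1) - harm j)"
    unfolding Bclosed j by simp
  finally show ?thesis .
qed

end
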